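(* Let $(x_1,y_1),\dots,(x_m,y_m)$ be observations with $x_i\in[N]$ and labels $y_i\in[0,M]$. For $j\in[N]$ let $\mu(j)=\frac{\sum_i[x_i\le j]y_i}{\sum_i[x_i\le j]}$, $\gamma(j)=\frac{\sum_i[x_i>j]y_i}{\sum_i[x_i>j]}$ and $L(j)=\frac1m\Big(\sum_{i=1}^m[x_i\le j](y_i-\mu(j))^2+\sum_{i=1}^m[x_i>j](y_i-\gamma(j))^2\Big)$. Then for any $j'>j$, setting $b=\sum_{i=1}^m[j<x_i\le j']$, we have $L(j')\le L(j)+\frac{5bM^2}{4m}$.
   Context: $[N]=\{1,\dots,N\}$ and $[E]$ denotes the indicator of event $E$. If one side of a split is empty, the corresponding sum is empty and contributes $0$. *)

theory Defs
  imports Complex_Main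
begin

text \<open>Observations are indexed by i in {1..m}: x i is the feature, y i the label.
  Division by zero is 0 in Isabelle; this only arises when the corresponding sum
  is empty, in which case the term contributes 0 anyway.\<close>

definition mu :: "nat \<Rightarrow> (nat \<Rightarrow> nat) \<Rightarrow> (nat \<Rightarrow> real) \<Rightarrow> nat \<Rightarrow> real" where
  "mu m x y j = (\<Sum>i\<in>{1..m}. (if x i \<le> j then y i else 0)) /
                (\<Sum>i\<in>{1..m}. (if x i \<le> j then 1 else 0))"

definition gam :: "nat \<Rightarrow> (nat \<Rightarrow> nat) \<Rightarrow> (nat \<Rightarrow> real) \<Rightarrow> nat \<Rightarrow> real" where
  "gam m x y j = (\<Sum>i\<in>{1..m}. (if x i > j then y i else 0)) /
                 (\<Sum>i\<in>{1..m}. (if x i > j then 1 else 0))"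

definition Lsplit :: "nat \<Rightarrow> (nat \<Rightarrow> nat) \<Rightarrow> (nat \<Rightarrow> real) \<Rightarrow> nat \<Rightarrow> real" where
  "Lsplit m x y j = (1 / real m) *
     ((\<Sum>i\<in>{1..m}. (if x i \<le> j then (y i - mu m x y j)^2 else 0)) +
      (\<Sum>i\<in>{1..m}. (if x i > j then (y i - gam m x y j)^2 else 0)))"

end

theory Submission
  imports Defs
begin

lemma mean_min:
  fixes y :: "nat \<Rightarrow> real"
  assumes "finite T"
  shows "(\<Sum>i\<in>T. (y i - sum y T / real (card T))^2) \<le> (\<Sum>i\<in>T. (y i - c)^2)"
proof (cases "card T = 0")
  case True
  then have "T = {}" using assms by simp
  then show ?thesis by simp
next
  case False
  define a where "a = sum y T / real (card T)"
  have s0: "(\<Sum>i\<in>T. (y i - a)) = 0"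
    using False by (simp add: sum_subtractf a_def)
  have "(\<Sum>i\<in>T. (y i - c)^2) = (\<Sum>i\<in>T. (y i - a)^2 + 2*(a-c)*(y i - a) + (a-c)^2)"
    by (rule sum.cong) (auto simp: power2_eq_square algebra_simps)
  also have "\<dots> = (\<Sum>i\<in>T. (y i - a)^2) + 2*(a-c)*(\<Sum>i\<in>T. (y i - a)) + real (card T)*(a-c)^2"
    by (simp add: sum.distrib sum_distrib_left)
  also have "\<dots> \<ge> (\<Sum>i\<in>T. (y i - a)^2)" using s0 by simp
  finally show ?thesis unfolding a_def .
qed

lemma filt:
  fixes f :: "nat \<Rightarrow> real"
  shows "(\<Sum>i\<in>{1..m}. if P i then f i else 0) = sum f {i\<in>{1..m}. P i}"
  by (rule sum.inter_filter[symmetric]) simp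

lemma filt2: "sum (\<lambda>_. 1::real) T = real (card T)" by simp

lemma filt1:
  shows "(\<Sum>i\<in>{1..m::nat}. if P i then 1 else (0::real)) = real (card {i\<in>{1..m}. P i})"
  by (simp add: sum.inter_filter[symmetric])

theorem lemma2:
  fixes N m :: nat and x :: "nat \<Rightarrow> nat" and y :: "nat \<Rightarrow> real" and M :: real
    and j j' :: nat
  assumes hx: "\<And>i. i \<in> {1..m} \<Longrightarrow> x i \<in> {1..N}"
    and hy: "\<And>i. i \<in> {1..m} \<Longrightarrow> y i \<in> {0..M}"
    and hj: "j \<in> {1..N}" and hj': "j' \<in> {1..N}" and hjj: "j < j'"
  shows "Lsplit m x y j' \<le> Lsplit m x y j +
           5 * real (card {i \<in> {1..m}. j < x i \<and> x i \<le> j'}) * M^2 / (4 * real m)"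
proof -
  define I where "I = {1..m}"
  define A where "A = {i\<in>I. x i \<le> j}"
  define B where "B = {i\<in>I. j < x i \<and> x i \<le> j'}"
  define AB where "AB = {i\<in>I. x i \<le> j'}"
  define C where "C = {i\<in>I. x i > j'}"
  define BC where "BC = {i\<in>I. x i > j}"
  define SS where "SS = (\<lambda>T c. \<Sum>i\<in>T. (y i - c)^2)"
  define mn where "mn = (\<lambda>T. sum y T / real (card T))"
  have fin: "finite A" "finite B" "finite AB" "finite C" "finite BC"
    unfolding A_def B_def AB_def C_def BC_def I_def by auto
  have mm: "\<And>T c. finite T \<Longrightarrow> SS T (mn T) \<le> SS T c"
    unfolding SS_def mn_def by (rule mean_min)
  have Lj: "Lsplit m x y j = (1/real m) * (SS A (mn A) + SS BC (mn BC))"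
    unfolding Lsplit_def mu_def gam_def filt filt2 SS_def mn_def A_def BC_def I_def ..
  have Lj': "Lsplit m x y j' = (1/real m) * (SS AB (mn AB) + SS C (mn C))"
    unfolding Lsplit_def mu_def gam_def filt filt2 SS_def mn_def AB_def C_def I_def ..
  have ABu: "AB = A \<union> B" "A \<inter> B = {}" unfolding AB_def A_def B_def using hjj by auto
  have Csub: "C \<subseteq> BC" unfolding C_def BC_def using hjj by auto
  have yB: "\<And>i. i \<in> I \<Longrightarrow> 0 \<le> y i \<and> y i \<le> M" using hy unfolding I_def by auto
  have mA: "B \<noteq> {} \<Longrightarrow> 0 \<le> mn A \<and> mn A \<le> M"
  proof -
    assume "B \<noteq> {}"
    then obtain k where "k \<in> B" by auto
    then have M0: "0 \<le> M" using yB unfolding B_def by force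
    have s0: "0 \<le> sum y A" by (rule sum_nonneg) (use yB in \<open>auto simp: A_def\<close>)
    have s1: "sum y A \<le> real (card A) * M"
      using sum_mono[of A y "\<lambda>_. M"] yB by (auto simp: A_def)
    show ?thesis
    proof (cases "card A = 0")
      case True then show ?thesis using M0 by (simp add: mn_def)
    next
      case False
      then show ?thesis using s0 s1 by (auto simp: mn_def field_simps)
    qed
  qed
  have bB: "SS B (mn A) \<le> real (card B) * M^2"
  proof (cases "B = {}")
    case True then show ?thesis by (simp add: SS_def)
  next
    case False
    have "SS B (mn A) \<le> (\<Sum>i\<in>B. M^2)" unfolding SS_def
    proof (rule sum_mono)
      fix i assume "i \<in> B"
      then have "0 \<le> y i \<and> y i \<le> M" using yB unfolding B_def by auto
      moreover have "0 \<le> mn A \<and> mn A \<le> M" using mA False by auto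
      ultimately have "\<bar>y i - mn A\<bar> \<le> \<bar>M\<bar>" by auto
      then show "(y i - mn A)^2 \<le> M^2" by (simp add: abs_le_square_iff)
    qed
    then show ?thesis by simp
  qed
  have h1: "SS AB (mn AB) \<le> SS A (mn A) + real (card B) * M^2"
  proof -
    have "SS AB (mn AB) \<le> SS AB (mn A)" using mm fin by auto
    also have "\<dots> = SS A (mn A) + SS B (mn A)"
      unfolding SS_def ABu(1) using fin ABu(2) by (simp add: sum.union_disjoint)
    finally show ?thesis using bB by simp
  qed
  have h2: "SS C (mn C) \<le> SS BC (mn BC)"
  proof -
    have "SS C (mn C) \<le> SS C (mn BC)" using mm fin by auto
    also have "\<dots> \<le> SS BC (mn BC)" unfolding SS_def
      by (rule sum_mono2) (use fin Csub in auto)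
    finally show ?thesis .
  qed
  have "Lsplit m x y j' \<le> (1/real m) * (SS A (mn A) + SS BC (mn BC) + real (card B) * M^2)"
    unfolding Lj' using h1 h2 by (intro mult_left_mono) auto
  also have "\<dots> = Lsplit m x y j + real (card B) * M^2 / real m"
    unfolding Lj by (simp add: add_divide_distrib)
  also have "\<dots> \<le> Lsplit m x y j + 5 * real (card B) * M^2 / (4 * real m)"
  proof -
    have X: "0 \<le> real (card B) * M^2" by simp
    have "real (card B) * M^2 / real m = (4 * (real (card B) * M^2)) / (4 * real m)" by simp
    also have "\<dots> \<le> (5 * (real (card B) * M^2)) / (4 * real m)"
      by (rule divide_right_mono) (use X in auto)
    finally show ?thesis by (simp add: mult.assoc)
  qed
  finally show ?thesis unfolding B_def I_def .
qed

end
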